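(* Let $\mathfrak{A}$ be a sheaf of metric structures over a topological space $X$, let $\mathbb{F}$ be a filter of open subsets of $X$, and let $(\sigma_n)_{n}$ be a sequence of sections, all defined on an open set $U\in\mathbb{F}$, which is Cauchy with respect to the pseudometric $\rho_{\mathbb{F}}$. Then: (1) there exists a function $\mu_\infty$ defined on $U$ with $\mu_\infty(x)\in E_x$ for all $x\in U$ (not necessarily continuous) such that $\lim_{n\to\infty}\rho_{\mathbb{F}}(\sigma_n,\mu_\infty)=0$, where $\rho_{\mathbb{F}}$ is extended to such functions by the same formula; (2) if moreover $X$ is a regular topological space and the interior (in $E$) of the image of $\mu_\infty$ is nonempty, then there exists an open set $V\subseteq U$ such that $\mu_\infty\upharpoonright V$ is continuous.
   Context: A topological sheaf over $X$ is a pair $(E,p)$ with $p:E\to X$ a local homeomorphism; a section is a continuous $\sigma:U\to E$, $U\subseteq X$ open, with $p\circ\sigma=\mathrm{Id}_U$; $E_x=p^{-1}(x)$. A sheaf of metric structures $\mathfrak{A}$ on $X$ is such a sheaf where each fiber $E_x$ is the universe of a metric structure (in continuous logic) for a fixed metric signature, with $(E_x,d_x)$ a complete metric space of diameter $1$, and where the interpretations of predicates, functions, and the distance $d^{\mathfrak{A}}=\bigcup_x d_x$ are continuous on $\bigcup_x E_x^n$ (topologized by the basic open sets $\langle\sigma_1,\dots,\sigma_n\rangle=\{(\sigma_1(y),\dots,\sigma_n(y))\}$), constants are continuous global sections, and moduli of uniform continuity have positive infimum over $x$ at each $\varepsilon>0$. A filter of open sets is a nonempty family of nonempty open sets closed under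 finite intersections and open supersets. For $\sigma,\mu$ with domains in $\mathbb{F}$, $\mathbb{F}_{\sigma\mu}=\{W\cap\mathrm{dom}(\sigma)\cap\mathrm{dom}(\mu):W\in\mathbb{F}\}$ and $\rho_{\mathbb{F}}(\sigma,\mu)=\inf_{W\in\mathbb{F}_{\sigma\mu}}\sup_{x\in W}d_x(\sigma(x),\mu(x))$. *)

theory Defs
  imports "HOL-Analysis.Analysis"
begin

definition local_homeomorphism :: "'e topology \<Rightarrow> 'x topology \<Rightarrow> ('e \<Rightarrow> 'x) \<Rightarrow> bool" where
  "local_homeomorphism E X p \<longleftrightarrow>
     continuous_map E X p \<and>
     (\<forall>e\<in>topspace E. \<exists>W. openin E W \<and> e \<in> W \<and> openin X (p ` W) \<and>
        homeomorphic_map (subtopology E W) (subtopology X (p ` W)) p)"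

definition fiber :: "'e topology \<Rightarrow> ('e \<Rightarrow> 'x) \<Rightarrow> 'x \<Rightarrow> 'e set" where
  "fiber E p x = {e \<in> topspace E. p e = x}"

definition is_section :: "'x topology \<Rightarrow> 'e topology \<Rightarrow> ('e \<Rightarrow> 'x) \<Rightarrow> 'x set \<Rightarrow> ('x \<Rightarrow> 'e) \<Rightarrow> bool" where
  "is_section X E p U \<sigma> \<longleftrightarrow> openin X U \<and> continuous_map (subtopology X U) E \<sigma> \<and> (\<forall>y\<in>U. p (\<sigma> y) = y)"

text \<open>The topology on the union over x of E_x^n (n-tuples as lists of length n),
  generated by the basic open sets of the form
  the set of all tuples (sigma_1(y),...,sigma_n(y)) with y in U,
  for sections sigma_1,...,sigma_n on a common open domain U.\<close>
definition fiber_power_top :: "'x topology \<Rightarrow> 'e topology \<Rightarrow> ('e \<Rightarrow> 'x) \<Rightarrow> nat \<Rightarrow> 'e list topology" where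
  "fiber_power_top X E p n = topology_generated_by
     {{map (\<lambda>\<sigma>. \<sigma> y) ss | y. y \<in> U} | U ss.
        length ss = n \<and> (\<forall>\<sigma>\<in>set ss. is_section X E p U \<sigma>)}"

definition fiber_tuples :: "'e topology \<Rightarrow> ('e \<Rightarrow> 'x) \<Rightarrow> 'x \<Rightarrow> nat \<Rightarrow> 'e list set" where
  "fiber_tuples E p x n = {as. length as = n \<and> set as \<subseteq> fiber E p x}"

text \<open>A sheaf of metric structures over X for a metric signature with predicate
  symbols of type 'r (arity arP, interpretation P), function symbols of type 'f
  (arity arF \<ge> 1, interpretation F) and constant symbols of type 'c
  (interpretation C, a global section).\<close>
definition sheaf_metric_structure ::
  "'x topology \<Rightarrow> 'e topology \<Rightarrow> ('e \<Rightarrow> 'x) \<Rightarrow> ('e \<Rightarrow> 'e \<Rightarrow> real) \<Rightarrow>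
   ('r \<Rightarrow> nat) \<Rightarrow> ('r \<Rightarrow> 'e list \<Rightarrow> real) \<Rightarrow>
   ('f \<Rightarrow> nat) \<Rightarrow> ('f \<Rightarrow> 'e list \<Rightarrow> 'e) \<Rightarrow> ('c \<Rightarrow> 'x \<Rightarrow> 'e) \<Rightarrow> bool" where
  "sheaf_metric_structure X E p d arP P arF F C \<longleftrightarrow>
     local_homeomorphism E X p \<and>
     (\<forall>x\<in>topspace X. fiber E p x \<noteq> {} \<and>
        Metric_space (fiber E p x) d \<and> Metric_space.mcomplete (fiber E p x) d \<and>
        (\<forall>a\<in>fiber E p x. \<forall>b\<in>fiber E p x. d a b \<le> 1)) \<and>
     continuous_map (fiber_power_top X E p 2) euclideanreal (\<lambda>as. d (as!0) (as!1)) \<and>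
     (\<forall>r. continuous_map (fiber_power_top X E p (arP r)) euclideanreal (P r) \<and>
        (\<forall>x\<in>topspace X. \<forall>as\<in>fiber_tuples E p x (arP r). 0 \<le> P r as \<and> P r as \<le> 1) \<and>
        (\<forall>\<epsilon>>0. \<exists>\<delta>>0. \<forall>x\<in>topspace X. \<forall>as\<in>fiber_tuples E p x (arP r).
            \<forall>bs\<in>fiber_tuples E p x (arP r).
            (\<forall>i<arP r. d (as!i) (bs!i) < \<delta>) \<longrightarrow> \<bar>P r as - P r bs\<bar> \<le> \<epsilon>)) \<and>
     (\<forall>f. 0 < arF f \<and> continuous_map (fiber_power_top X E p (arF f)) E (F f) \<and>
        (\<forall>x\<in>topspace X. \<forall>as\<in>fiber_tuples E p x (arF f). F f as \<in> fiber E p x) \<and>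
        (\<forall>\<epsilon>>0. \<exists>\<delta>>0. \<forall>x\<in>topspace X. \<forall>as\<in>fiber_tuples E p x (arF f).
            \<forall>bs\<in>fiber_tuples E p x (arF f).
            (\<forall>i<arF f. d (as!i) (bs!i) < \<delta>) \<longrightarrow> d (F f as) (F f bs) \<le> \<epsilon>)) \<and>
     (\<forall>c. is_section X E p (topspace X) (C c))"

definition open_filter :: "'x topology \<Rightarrow> 'x set set \<Rightarrow> bool" where
  "open_filter X \<F> \<longleftrightarrow> \<F> \<noteq> {} \<and>
     (\<forall>W\<in>\<F>. openin X W \<and> W \<noteq> {}) \<and>
     (\<forall>W1\<in>\<F>. \<forall>W2\<in>\<F>. W1 \<inter> W2 \<in> \<F>) \<and>
     (\<forall>W\<in>\<F>. \<forall>W'. openin X W' \<and> W \<subseteq> W' \<longrightarrow> W' \<in> \<F>)"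

definition rhoF :: "'x set set \<Rightarrow> ('e \<Rightarrow> 'e \<Rightarrow> real) \<Rightarrow> 'x set \<Rightarrow> ('x \<Rightarrow> 'e) \<Rightarrow> 'x set \<Rightarrow> ('x \<Rightarrow> 'e) \<Rightarrow> real" where
  "rhoF \<F> d Us \<sigma> Um \<mu> =
     Inf {(SUP x\<in>W'. d (\<sigma> x) (\<mu> x)) | W'. \<exists>W\<in>\<F>. W' = W \<inter> Us \<inter> Um}"

end

theory Submission
  imports Defs
begin

lemma filt_ne: "open_filter X \<F> \<Longrightarrow> W \<in> \<F> \<Longrightarrow> U \<in> \<F> \<Longrightarrow> W \<inter> U \<noteq> {}"
  unfolding open_filter_def by blast

lemma filt_int: "open_filter X \<F> \<Longrightarrow> W \<in> \<F> \<Longrightarrow> U \<in> \<F> \<Longrightarrow> W \<inter> U \<in> \<F>"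
  unfolding open_filter_def by blast

lemma rho_lt:
  assumes filt: "open_filter X \<F>" and U: "U \<in> \<F>"
    and bnd: "\<forall>x\<in>U. 0 \<le> d (f x) (g x) \<and> d (f x) (g x) \<le> 1"
    and lt: "rhoF \<F> d U f U g < \<epsilon>"
  shows "\<exists>W\<in>\<F>. \<forall>x\<in>W \<inter> U. d (f x) (g x) < \<epsilon>"
proof -
  let ?S = "{(SUP x\<in>W'. d (f x) (g x)) | W'. \<exists>W\<in>\<F>. W' = W \<inter> U \<inter> U}"
  have ne: "?S \<noteq> {}" using U by blast
  have "Inf ?S < \<epsilon>" using lt unfolding rhoF_def .
  then have "\<exists>s\<in>?S. s < \<epsilon>" by (rule cInf_lessD[OF ne])
  then obtain s where sS: "s \<in> ?S" and "s < \<epsilon>" ..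
  from sS have "\<exists>W'. s = (SUP x\<in>W'. d (f x) (g x)) \<and> (\<exists>W\<in>\<F>. W' = W \<inter> U \<inter> U)" by (simp only: mem_Collect_eq)
  then obtain W' W where W: "W \<in> \<F>" and s1: "s = (SUP x\<in>W'. d (f x) (g x))" and W'e: "W' = W \<inter> U \<inter> U" by blast
  have s0: "s = (SUP x\<in>W \<inter> U \<inter> U. d (f x) (g x))" using s1 W'e by simp
  have s: "s = (SUP x\<in>W \<inter> U. d (f x) (g x))" using s0 by (simp add: Int_assoc)
  have "\<forall>x\<in>W \<inter> U. d (f x) (g x) < \<epsilon>"
  proof
    fix x assume x: "x \<in> W \<inter> U"
    have "bdd_above ((\<lambda>x. d (f x) (g x)) ` (W \<inter> U))" by (rule bdd_aboveI[of _ 1]) (use bnd in auto)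
    then have "d (f x) (g x) \<le> s" unfolding s using x by (intro cSUP_upper) auto
    then show "d (f x) (g x) < \<epsilon>" using \<open>s < \<epsilon>\<close> by simp
  qed
  then show ?thesis using W by blast
qed


lemma rho_le:
  assumes filt: "open_filter X \<F>" and U: "U \<in> \<F>"
    and bnd: "\<forall>x\<in>U. 0 \<le> d (f x) (g x) \<and> d (f x) (g x) \<le> 1"
    and W: "W \<in> \<F>" and le: "\<forall>x\<in>W \<inter> U. d (f x) (g x) \<le> c"
  shows "rhoF \<F> d U f U g \<le> c"
proof -
  let ?S = "{(SUP x\<in>W'. d (f x) (g x)) | W'. \<exists>W\<in>\<F>. W' = W \<inter> U \<inter> U}"
  have bb: "bdd_below ?S"
  proof (rule bdd_belowI[of _ 0])
    fix s assume "s \<in> ?S"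
    then have "\<exists>W''. s = (SUP x\<in>W''. d (f x) (g x)) \<and> (\<exists>W\<in>\<F>. W'' = W \<inter> U \<inter> U)" by (simp only: mem_Collect_eq)
  then obtain W'' W' where W': "W' \<in> \<F>" and s1: "s = (SUP x\<in>W''. d (f x) (g x))" and W''e: "W'' = W' \<inter> U \<inter> U" by blast
  have s: "s = (SUP x\<in>W' \<inter> U. d (f x) (g x))" using s1 W''e by (simp add: Int_assoc)
    obtain x where x: "x \<in> W' \<inter> U" using filt_ne[OF filt W' U] by blast
    have "bdd_above ((\<lambda>x. d (f x) (g x)) ` (W' \<inter> U))" by (rule bdd_aboveI[of _ 1]) (use bnd in auto)
    then have "d (f x) (g x) \<le> s" unfolding s using x by (intro cSUP_upper) auto
    moreover have "0 \<le> d (f x) (g x)" using bnd x by blast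
    ultimately show "0 \<le> s" by linarith
  qed
  have "(SUP x\<in>W \<inter> U. d (f x) (g x)) = (SUP x\<in>W \<inter> U \<inter> U. d (f x) (g x))" by (simp add: Int_assoc)
  then have "(SUP x\<in>W \<inter> U. d (f x) (g x)) \<in> ?S" using W by (simp only: mem_Collect_eq) blast
  then have "rhoF \<F> d U f U g \<le> (SUP x\<in>W \<inter> U. d (f x) (g x))"
    unfolding rhoF_def using bb by (rule cInf_lower)
  also have "\<dots> \<le> c" using le filt_ne[OF filt W U] by (intro cSUP_least) auto
  finally show ?thesis .
qed

lemma rho_nonneg:
  assumes filt: "open_filter X \<F>" and U: "U \<in> \<F>"
    and bnd: "\<forall>x\<in>U. 0 \<le> d (f x) (g x) \<and> d (f x) (g x) \<le> 1"
  shows "0 \<le> rhoF \<F> d U f U g"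
  unfolding rhoF_def
proof (rule cInf_greatest)
  show "{(SUP x\<in>W'. d (f x) (g x)) | W'. \<exists>W\<in>\<F>. W' = W \<inter> U \<inter> U} \<noteq> {}" using U by blast
next
  fix s assume "s \<in> {(SUP x\<in>W'. d (f x) (g x)) | W'. \<exists>W\<in>\<F>. W' = W \<inter> U \<inter> U}"
  then have "\<exists>W''. s = (SUP x\<in>W''. d (f x) (g x)) \<and> (\<exists>W\<in>\<F>. W'' = W \<inter> U \<inter> U)" by (simp only: mem_Collect_eq)
  then obtain W'' W' where W': "W' \<in> \<F>" and s1: "s = (SUP x\<in>W''. d (f x) (g x))" and W''e: "W'' = W' \<inter> U \<inter> U" by blast
  have s: "s = (SUP x\<in>W' \<inter> U. d (f x) (g x))" using s1 W''e by (simp add: Int_assoc)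
  obtain x where x: "x \<in> W' \<inter> U" using filt_ne[OF filt W' U] by blast
  have "bdd_above ((\<lambda>x. d (f x) (g x)) ` (W' \<inter> U))" by (rule bdd_aboveI[of _ 1]) (use bnd in auto)
  then have "d (f x) (g x) \<le> s" unfolding s using x by (intro cSUP_upper) auto
  moreover have "0 \<le> d (f x) (g x)" using bnd x by blast
    ultimately show "0 \<le> s" by linarith
qed


lemma bnd_lemma:
  assumes MS: "\<forall>x\<in>U. Metric_space (fiber E p x) d \<and> Metric_space.mcomplete (fiber E p x) d \<and> (\<forall>a\<in>fiber E p x. \<forall>b\<in>fiber E p x. d a b \<le> 1)"
    and f: "\<forall>x\<in>U. f x \<in> fiber E p x" and g: "\<forall>x\<in>U. g x \<in> fiber E p x"
  shows "\<forall>x\<in>U. 0 \<le> d (f x) (g x) \<and> d (f x) (g x) \<le> 1"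
proof
  fix x assume x: "x \<in> U"
  have M: "Metric_space (fiber E p x) d" and B: "\<forall>a\<in>fiber E p x. \<forall>b\<in>fiber E p x. d a b \<le> 1"
    using MS x by auto
  have "0 \<le> d (f x) (g x)" using Metric_space.nonneg[OF M] .
  moreover have "d (f x) (g x) \<le> 1" using B f g x by blast
  ultimately show "0 \<le> d (f x) (g x) \<and> d (f x) (g x) \<le> 1" by blast
qed

lemma part1:
  assumes filt: "open_filter X \<F>" and U: "U \<in> \<F>"
    and MS: "\<forall>x\<in>U. Metric_space (fiber E p x) d \<and> Metric_space.mcomplete (fiber E p x) d \<and> (\<forall>a\<in>fiber E p x. \<forall>b\<in>fiber E p x. d a b \<le> 1)"
    and inF: "\<forall>n. \<forall>x\<in>U. \<sigma> n x \<in> fiber E p x"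
    and cauchy: "\<forall>\<epsilon>>0. \<exists>N. \<forall>m\<ge>N. \<forall>n\<ge>N. rhoF \<F> d U (\<sigma> m) U (\<sigma> n) < \<epsilon>"
  shows "\<exists>\<mu>. (\<forall>x\<in>U. \<mu> x \<in> fiber E p x) \<and> (\<lambda>n. rhoF \<F> d U (\<sigma> n) U \<mu>) \<longlonglongrightarrow> 0"
proof -
  have MSx: "Metric_space (fiber E p x) d" if "x \<in> U" for x using MS that by blast
  have MCx: "Metric_space.mcomplete (fiber E p x) d" if "x \<in> U" for x using MS that by blast
  have tri: "d a c \<le> d a b + d b c" if "x \<in> U" "a \<in> fiber E p x" "b \<in> fiber E p x" "c \<in> fiber E p x" for x a b c
    using Metric_space.triangle[OF MSx[OF that(1)]] that(2-4) by blast
  have com: "d a b = d b a" if "x \<in> U" for x a b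
    using Metric_space.commute[OF MSx[OF that(1)]] by blast
  have nn: "0 \<le> d a b" if "x \<in> U" for x a b
    using Metric_space.nonneg[OF MSx[OF that(1)]] by blast
  have z: "d a a = 0" if "x \<in> U" "a \<in> fiber E p x" for x a
    using Metric_space.mdist_zero[OF MSx[OF that(1)]] that(2) by blast
  have ex: "\<forall>k. \<exists>N. \<forall>m\<ge>N. \<forall>n\<ge>N. rhoF \<F> d U (\<sigma> m) U (\<sigma> n) < (1/2::real)^k"
  proof
    fix k :: nat
    have "(0::real) < (1/2)^k" by simp
    then show "\<exists>N. \<forall>m\<ge>N. \<forall>n\<ge>N. rhoF \<F> d U (\<sigma> m) U (\<sigma> n) < (1/2::real)^k"
      using cauchy by blast
  qed
  obtain Nf where Nf0: "\<forall>k. \<forall>m\<ge>Nf k. \<forall>n\<ge>Nf k. rhoF \<F> d U (\<sigma> m) U (\<sigma> n) < (1/2::real)^k"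
    using choice[OF ex] by blast
  have Nf: "rhoF \<F> d U (\<sigma> m) U (\<sigma> n) < (1/2::real)^k" if "m \<ge> Nf k" "n \<ge> Nf k" for k m n
    using Nf0 that by blast
  define N where "N k = (\<Sum>i\<le>k. Nf i)" for k
  have NfN: "Nf k \<le> N k" for k unfolding N_def by (rule member_le_sum) auto
  have Nmono: "N k \<le> N (Suc k)" for k by (simp add: N_def)
  have bs: "\<forall>x\<in>U. 0 \<le> d (\<sigma> m x) (\<sigma> n x) \<and> d (\<sigma> m x) (\<sigma> n x) \<le> 1" for m n
    by (rule bnd_lemma[OF MS]) (use inF in auto)
  have exW: "\<exists>Wk\<in>\<F>. \<forall>x\<in>Wk \<inter> U. d (\<sigma> (N k) x) (\<sigma> (N (Suc k)) x) < (1/2)^k" for k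
  proof (rule rho_lt[where f="\<sigma> (N k)" and g="\<sigma> (N (Suc k))", OF filt U bs[of "N k" "N (Suc k)"]])
    show "rhoF \<F> d U (\<sigma> (N k)) U (\<sigma> (N (Suc k))) < (1 / 2) ^ k"
    proof -
      have "Nf k \<le> N (Suc k)" using NfN[of k] Nmono[of k] by linarith
      then show ?thesis by (rule Nf[OF NfN])
    qed
  qed
  have exW': "\<forall>k. \<exists>Wk. Wk \<in> \<F> \<and> (\<forall>x\<in>Wk \<inter> U. d (\<sigma> (N k) x) (\<sigma> (N (Suc k)) x) < (1/2)^k)"
    using exW by blast
  obtain W where W0: "\<forall>k. W k \<in> \<F> \<and> (\<forall>x\<in>W k \<inter> U. d (\<sigma> (N k) x) (\<sigma> (N (Suc k)) x) < (1/2)^k)"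
    using choice[OF exW'] by blast
  have W: "W k \<in> \<F>" for k using W0 by blast
  have Wd: "d (\<sigma> (N k) x) (\<sigma> (N (Suc k)) x) < (1/2)^k" if "x \<in> W k \<inter> U" for k x
    using W0 that by blast
  define T where "T = rec_nat U (\<lambda>j S. S \<inter> W j)"
  have T0: "T 0 = U" and TS: "T (Suc j) = T j \<inter> W j" for j by (simp_all add: T_def)
  have TF: "T j \<in> \<F>" for j
    by (induction j) (simp_all add: T0 TS U W filt_int[OF filt])
  have TU: "T j \<subseteq> U" for j
    by (induction j) (auto simp: T0 TS)
  define s where "s = rec_nat (\<sigma> (N 0)) (\<lambda>j sj x. if x \<in> T (Suc j) then \<sigma> (N (Suc j)) x else sj x)"
  have s0: "s 0 = \<sigma> (N 0)" and sS: "s (Suc j) x = (if x \<in> T (Suc j) then \<sigma> (N (Suc j)) x else s j x)" for j x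
    by (simp_all add: s_def)
  have sT: "s j x = \<sigma> (N j) x" if "x \<in> T j" for j x
    using that by (cases j) (simp_all add: s0 sS)
  have sF: "s j x \<in> fiber E p x" if "x \<in> U" for j x
    by (induction j) (use that inF in \<open>simp_all add: s0 sS\<close>)
  have stp: "d (s j x) (s (Suc j) x) \<le> (1/2)^j" if x: "x \<in> U" for j x
  proof (cases "x \<in> T (Suc j)")
    case True
    then have "x \<in> T j" "x \<in> W j" by (simp_all add: TS)
    then show ?thesis using True sT[of x j] sS[of j x] Wd[of x j] x by simp
  next
    case False
    then show ?thesis using sS[of j x] z[OF x sF[OF x]] by simp
  qed
  have tel: "d (s j x) (s m x) \<le> 2*(1/2)^j - 2*(1/2)^m" if x: "x \<in> U" and jm: "j \<le> m" for j m x
    using jm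
  proof (induction m rule: dec_induct)
    case base
    then show ?case using z[OF x sF[OF x]] by simp
  next
    case (step n)
    have "d (s j x) (s (Suc n) x) \<le> d (s j x) (s n x) + d (s n x) (s (Suc n) x)"
      using tri[OF x sF[OF x] sF[OF x] sF[OF x]] .
    also have "\<dots> \<le> (2*(1/2)^j - 2*(1/2)^n) + (1/2)^n"
      using step.IH stp[OF x, of n] by (rule add_mono)
    also have "\<dots> = 2*(1/2)^j - 2*(1/2::real)^(Suc n)" by simp
    finally show ?case .
  qed
  have tel2: "d (s j x) (s m x) \<le> 2*(1/2)^j" if x: "x \<in> U" and jm: "j \<le> m" for j m x
    proof -
    have "(0::real) \<le> (1/2)^m" by simp
    then show ?thesis using tel[OF x jm] by linarith
  qed
  have conv: "\<exists>l. limitin (Metric_space.mtopology (fiber E p x) d) (\<lambda>m. s m x) l sequentially" if x: "x \<in> U" for x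
  proof -
    have "Metric_space.MCauchy (fiber E p x) d (\<lambda>m. s m x)"
      unfolding Metric_space.MCauchy_def[OF MSx[OF x]]
    proof (intro conjI allI impI)
      show "range (\<lambda>m. s m x) \<subseteq> fiber E p x" using sF[OF x] by blast
    next
      fix \<epsilon> :: real assume "\<epsilon> > 0"
      then obtain k where k: "(1/2::real)^k < \<epsilon>/4" using real_arch_pow_inv[of "\<epsilon>/4" "1/2"] by auto
      have "\<forall>n n'. k \<le> n \<longrightarrow> k \<le> n' \<longrightarrow> d (s n x) (s n' x) < \<epsilon>"
      proof (intro allI impI)
        fix n n' assume "k \<le> n" "k \<le> n'"
        have "d (s n x) (s n' x) \<le> d (s n x) (s k x) + d (s k x) (s n' x)"
          using tri[OF x sF[OF x] sF[OF x] sF[OF x]] .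
        also have "\<dots> = d (s k x) (s n x) + d (s k x) (s n' x)" using com[OF x] by simp
        also have "\<dots> \<le> 2*(1/2)^k + 2*(1/2)^k"
          using tel2[OF x \<open>k \<le> n\<close>] tel2[OF x \<open>k \<le> n'\<close>] by (rule add_mono)
        finally show "d (s n x) (s n' x) < \<epsilon>" using k by simp
      qed
      then show "\<exists>N. \<forall>n n'. N \<le> n \<longrightarrow> N \<le> n' \<longrightarrow> d (s n x) (s n' x) < \<epsilon>" by blast
    qed
    then show ?thesis using MCx[OF x] unfolding Metric_space.mcomplete_def[OF MSx[OF x]] by blast
  qed
  define \<mu> where "\<mu> x = (SOME l. limitin (Metric_space.mtopology (fiber E p x) d) (\<lambda>m. s m x) l sequentially)" for x
  have muL: "limitin (Metric_space.mtopology (fiber E p x) d) (\<lambda>m. s m x) (\<mu> x) sequentially" if x: "x \<in> U" for x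
    unfolding \<mu>_def using conv[OF x] by (rule someI_ex)
  have muF: "\<mu> x \<in> fiber E p x" if x: "x \<in> U" for x
    using Metric_space.limitin_mspace[OF MSx[OF x] muL[OF x]] .
  have muB: "d (\<sigma> (N j) x) (\<mu> x) \<le> 2*(1/2)^j" if xT: "x \<in> T j" for j x
  proof -
    have x: "x \<in> U" using xT TU by blast
    have lim0: "(\<lambda>m. d (s m x) (\<mu> x)) \<longlonglongrightarrow> 0"
      using muL[OF x] unfolding Metric_space.limitin_metric_dist_null[OF MSx[OF x]] by blast
    have "d (s j x) (\<mu> x) \<le> 2*(1/2)^j + 0"
    proof (rule tendsto_le[OF trivial_limit_sequentially])
      show "(\<lambda>m. 2*(1/2)^j + d (s m x) (\<mu> x)) \<longlonglongrightarrow> 2*(1/2)^j + 0"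
        by (intro tendsto_intros lim0)
      show "(\<lambda>m. d (s j x) (\<mu> x)) \<longlonglongrightarrow> d (s j x) (\<mu> x)" by simp
      show "\<forall>\<^sub>F m in sequentially. d (s j x) (\<mu> x) \<le> 2*(1/2)^j + d (s m x) (\<mu> x)"
        unfolding eventually_sequentially
      proof (intro exI allI impI)
        fix m assume "j \<le> m"
        have "d (s j x) (\<mu> x) \<le> d (s j x) (s m x) + d (s m x) (\<mu> x)"
          using tri[OF x sF[OF x] sF[OF x] muF[OF x]] .
        then show "d (s j x) (\<mu> x) \<le> 2*(1/2)^j + d (s m x) (\<mu> x)"
          using tel2[OF x \<open>j \<le> m\<close>] by simp
      qed
    qed
    then show ?thesis using sT[OF xT] by simp
  qed
  have bm: "\<forall>x\<in>U. 0 \<le> d (\<sigma> n x) (\<mu> x) \<and> d (\<sigma> n x) (\<mu> x) \<le> 1" for n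
    by (rule bnd_lemma[OF MS]) (use inF muF in auto)
  have "(\<lambda>n. rhoF \<F> d U (\<sigma> n) U \<mu>) \<longlonglongrightarrow> 0"
  proof (rule LIMSEQ_I)
    fix r :: real assume "r > 0"
    then obtain k where k: "(1/2::real)^k < r/3" using real_arch_pow_inv[of "r/3" "1/2"] by auto
    have "norm (rhoF \<F> d U (\<sigma> n) U \<mu> - 0) < r" if n: "n \<ge> N k" for n
    proof -
      have "rhoF \<F> d U (\<sigma> n) U (\<sigma> (N k)) < (1/2)^k" by (rule Nf[OF order_trans[OF NfN n] NfN])
      then obtain W' where W': "W' \<in> \<F>" and W'd: "\<forall>x\<in>W' \<inter> U. d (\<sigma> n x) (\<sigma> (N k) x) < (1/2)^k"
        using rho_lt[where f="\<sigma> n" and g="\<sigma> (N k)", OF filt U bs[of n "N k"]] by blast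
      have "rhoF \<F> d U (\<sigma> n) U \<mu> \<le> 3*(1/2)^k"
      proof (rule rho_le[where f="\<sigma> n" and g="\<mu>", OF filt U bm filt_int[OF filt W' TF]])
        show "\<forall>x\<in>(W' \<inter> T k) \<inter> U. d (\<sigma> n x) (\<mu> x) \<le> 3*(1/2)^k"
        proof
          fix x assume xx: "x \<in> (W' \<inter> T k) \<inter> U"
          then have x: "x \<in> U" by blast
          have "d (\<sigma> n x) (\<mu> x) \<le> d (\<sigma> n x) (\<sigma> (N k) x) + d (\<sigma> (N k) x) (\<mu> x)"
            using tri[OF x _ _ muF[OF x]] inF x by blast
          also have "\<dots> \<le> (1/2)^k + 2*(1/2)^k"
          proof -
            have a: "d (\<sigma> n x) (\<sigma> (N k) x) < (1/2)^k" using W'd xx by blast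
            have b: "d (\<sigma> (N k) x) (\<mu> x) \<le> 2*(1/2)^k" using muB[of x k] xx by blast
            show ?thesis using add_mono[OF less_imp_le[OF a] b] .
          qed
          finally show "d (\<sigma> n x) (\<mu> x) \<le> 3*(1/2)^k" by simp
        qed
      qed
      moreover have "0 \<le> rhoF \<F> d U (\<sigma> n) U \<mu>" by (rule rho_nonneg[where f="\<sigma> n" and g="\<mu>", OF filt U bm])
      ultimately show ?thesis using k by simp
    qed
    then show "\<exists>no. \<forall>n\<ge>no. norm (rhoF \<F> d U (\<sigma> n) U \<mu> - 0) < r" by blast
  qed
  moreover have "\<forall>x\<in>U. \<mu> x \<in> fiber E p x" using muF by blast
  ultimately show ?thesis by blast
qed


lemma part2:
  assumes lh: "local_homeomorphism E X p"
    and mu: "\<forall>x\<in>U. \<mu> x \<in> fiber E p x"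
    and int: "E interior_of (\<mu> ` U) \<noteq> {}"
  shows "\<exists>V. openin X V \<and> V \<noteq> {} \<and> V \<subseteq> U \<and> continuous_map (subtopology X V) E \<mu>"
proof -
  let ?O = "E interior_of (\<mu> ` U)"
  obtain e where e: "e \<in> ?O" using int by blast
  have Oo: "openin E ?O" by simp
  have OU: "?O \<subseteq> \<mu> ` U" by (rule interior_of_subset)
  have eE: "e \<in> topspace E" using Oo e openin_subset by blast
  obtain W where W: "openin E W" "e \<in> W" "openin X (p ` W)"
    and hm: "homeomorphic_map (subtopology E W) (subtopology X (p ` W)) p"
    using lh eE unfolding local_homeomorphism_def by blast
  define O' where "O' = ?O \<inter> W"
  have O'o: "openin E O'" using Oo W(1) O'_def by blast
  have O'ne: "O' \<noteq> {}" using e W(2) O'_def by blast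
  obtain g where g: "homeomorphic_maps (subtopology E W) (subtopology X (p ` W)) p g"
    using hm homeomorphic_map_maps by blast
  have om: "open_map (subtopology E W) (subtopology X (p ` W)) p"
    using hm homeomorphic_imp_open_map by blast
  have "openin (subtopology E W) O'"
    unfolding openin_subtopology O'_def using Oo by blast
  then have "openin (subtopology X (p ` W)) (p ` O')"
    using om unfolding open_map_def by blast
  then have Vo: "openin X (p ` O')" using W(3) openin_trans_full by blast
  have key: "\<And>e'. e' \<in> O' \<Longrightarrow> p e' \<in> U \<and> \<mu> (p e') = e'"
  proof -
    fix e' assume "e' \<in> O'"
    then have "e' \<in> \<mu> ` U" using OU O'_def by blast
    then obtain x where x: "x \<in> U" "e' = \<mu> x" by blast
    then have "p e' = x" using mu unfolding fiber_def by auto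
    then show "p e' \<in> U \<and> \<mu> (p e') = e'" using x by simp
  qed
  have gc: "continuous_map (subtopology X (p ` O')) E g"
  proof -
    have "continuous_map (subtopology X (p ` W)) (subtopology E W) g"
      using g unfolding homeomorphic_maps_def by blast
    then have "continuous_map (subtopology X (p ` W)) E g"
      using continuous_map_into_fulltopology by blast
    then show ?thesis by (rule continuous_map_from_subtopology_mono) (auto simp: O'_def)
  qed
  have "continuous_map (subtopology X (p ` O')) E \<mu>"
  proof (rule continuous_map_eq[OF gc])
    fix y assume "y \<in> topspace (subtopology X (p ` O'))"
    then obtain e' where e': "e' \<in> O'" "y = p e'" by auto
    have "e' \<in> topspace (subtopology E W)" using e' O'o openin_subset unfolding O'_def by fastforce
    then have "g (p e') = e'" using g unfolding homeomorphic_maps_def by blast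
    then show "g y = \<mu> y" using key e' by simp
  qed
  moreover have "p ` O' \<subseteq> U" using key by blast
  ultimately show ?thesis using Vo O'ne by blast
qed

theorem mainTheorem4:
  fixes X :: "'x topology" and E :: "'e topology" and p :: "'e \<Rightarrow> 'x"
    and d :: "'e \<Rightarrow> 'e \<Rightarrow> real"
    and arP :: "'r \<Rightarrow> nat" and P :: "'r \<Rightarrow> 'e list \<Rightarrow> real"
    and arF :: "'f \<Rightarrow> nat" and F :: "'f \<Rightarrow> 'e list \<Rightarrow> 'e"
    and C :: "'c \<Rightarrow> 'x \<Rightarrow> 'e"
    and \<F> :: "'x set set" and U :: "'x set" and \<sigma> :: "nat \<Rightarrow> 'x \<Rightarrow> 'e"
  assumes sheaf: "sheaf_metric_structure X E p d arP P arF F C"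
    and filt: "open_filter X \<F>"
    and U: "U \<in> \<F>"
    and sec: "\<And>n. is_section X E p U (\<sigma> n)"
    and cauchy: "\<forall>\<epsilon>>0. \<exists>N. \<forall>m\<ge>N. \<forall>n\<ge>N. rhoF \<F> d U (\<sigma> m) U (\<sigma> n) < \<epsilon>"
  shows "\<exists>\<mu>. (\<forall>x\<in>U. \<mu> x \<in> fiber E p x) \<and>
             (\<lambda>n. rhoF \<F> d U (\<sigma> n) U \<mu>) \<longlonglongrightarrow> 0 \<and>
             (regular_space X \<and> E interior_of (\<mu> ` U) \<noteq> {} \<longrightarrow>
                (\<exists>V. openin X V \<and> V \<noteq> {} \<and> V \<subseteq> U \<and>
                     continuous_map (subtopology X V) E \<mu>))"
proof -
  have lh: "local_homeomorphism E X p" using sheaf unfolding sheaf_metric_structure_def by (rule conjunct1)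
  have H: "\<forall>x\<in>topspace X. fiber E p x \<noteq> {} \<and>
        Metric_space (fiber E p x) d \<and> Metric_space.mcomplete (fiber E p x) d \<and>
        (\<forall>a\<in>fiber E p x. \<forall>b\<in>fiber E p x. d a b \<le> 1)"
    using sheaf unfolding sheaf_metric_structure_def by (elim conjE) assumption
  have Uo: "openin X U" using filt U unfolding open_filter_def by blast
  have UX: "U \<subseteq> topspace X" using openin_subset[OF Uo] .
  have MS: "\<forall>x\<in>U. Metric_space (fiber E p x) d \<and> Metric_space.mcomplete (fiber E p x) d \<and> (\<forall>a\<in>fiber E p x. \<forall>b\<in>fiber E p x. d a b \<le> 1)"
  proof
    fix x assume "x \<in> U"
    then have "x \<in> topspace X" using UX by blast
    then show "Metric_space (fiber E p x) d \<and> Metric_space.mcomplete (fiber E p x) d \<and> (\<forall>a\<in>fiber E p x. \<forall>b\<in>fiber E p x. d a b \<le> 1)"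
      using H by simp
  qed
  have inF: "\<forall>n. \<forall>x\<in>U. \<sigma> n x \<in> fiber E p x"
  proof (intro allI ballI)
    fix n x assume x: "x \<in> U"
    have c: "continuous_map (subtopology X U) E (\<sigma> n)" and pp: "p (\<sigma> n x) = x"
      using sec[of n] x unfolding is_section_def by auto
    have "x \<in> topspace (subtopology X U)" using x UX by (simp add: subsetD)
    then have "\<sigma> n x \<in> topspace E" using continuous_map_image_subset_topspace[OF c] by blast
    then show "\<sigma> n x \<in> fiber E p x" using pp unfolding fiber_def by simp
  qed
  obtain \<mu> where mu: "\<forall>x\<in>U. \<mu> x \<in> fiber E p x" and lim: "(\<lambda>n. rhoF \<F> d U (\<sigma> n) U \<mu>) \<longlonglongrightarrow> 0"
    using part1[OF filt U MS inF cauchy] by blast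
  show ?thesis using mu lim part2[OF lh mu] by blast
qed

end
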